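(* For every integer $q\ge2$, $\gamma^{DLD}(K_q^3)=q^2$.
   Context: $K_q^3=K_q\square K_q\square K_q$ is the graph with vertex set $\{1,\dots,q\}^3$ in which two vertices are adjacent iff they differ in exactly one coordinate. For a code (nonempty vertex subset) $C$ and vertex $v$, $I(C;v)=N[v]\cap C$, where $N[v]$ is the closed neighbourhood. A code $C$ is solid-locating-dominating if for all distinct non-codewords $u,v$, $I(C;u)\setminus I(C;v)\ne\emptyset$. $\gamma^{DLD}(G)$ is the minimum size of a solid-locating-dominating code in the finite graph $G$. *)

theory Defs
  imports Main
begin

type_synonym vtx = "nat \<times> nat \<times> nat"

definition Kq3_vertices :: "nat \<Rightarrow> vtx set" where
  "Kq3_vertices q = {1..q} \<times> {1..q} \<times> {1..q}"

definition Kq3_adj :: "vtx \<Rightarrow> vtx \<Rightarrow> bool" where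
  "Kq3_adj u v = (case u of (a1, a2, a3) \<Rightarrow> case v of (b1, b2, b3) \<Rightarrow>
     (a1 \<noteq> b1 \<and> a2 = b2 \<and> a3 = b3) \<or>
     (a1 = b1 \<and> a2 \<noteq> b2 \<and> a3 = b3) \<or>
     (a1 = b1 \<and> a2 = b2 \<and> a3 \<noteq> b3))"

definition closed_nbhd :: "'a set \<Rightarrow> ('a \<Rightarrow> 'a \<Rightarrow> bool) \<Rightarrow> 'a \<Rightarrow> 'a set" where
  "closed_nbhd V E v = {u \<in> V. u = v \<or> E v u}"

definition I_set :: "'a set \<Rightarrow> ('a \<Rightarrow> 'a \<Rightarrow> bool) \<Rightarrow> 'a set \<Rightarrow> 'a \<Rightarrow> 'a set" where
  "I_set V E C v = closed_nbhd V E v \<inter> C"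

definition is_DLD :: "'a set \<Rightarrow> ('a \<Rightarrow> 'a \<Rightarrow> bool) \<Rightarrow> 'a set \<Rightarrow> bool" where
  "is_DLD V E C \<longleftrightarrow> C \<subseteq> V \<and> C \<noteq> {} \<and>
     (\<forall>u \<in> V - C. \<forall>v \<in> V - C. u \<noteq> v \<longrightarrow> I_set V E C u - I_set V E C v \<noteq> {})"

definition gamma_DLD :: "'a set \<Rightarrow> ('a \<Rightarrow> 'a \<Rightarrow> bool) \<Rightarrow> nat" where
  "gamma_DLD V E = (LEAST k. \<exists>C. is_DLD V E C \<and> card C = k)"

end

theory Submission
  imports Defs
begin

lemma adj_simp[simp]: "Kq3_adj (a1,a2,a3) (b1,b2,b3) \<longleftrightarrow>
  (a1 \<noteq> b1 \<and> a2 = b2 \<and> a3 = b3) \<or> (a1 = b1 \<and> a2 \<noteq> b2 \<and> a3 = b3) \<or> (a1 = b1 \<and> a2 = b2 \<and> a3 \<noteq> b3)"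
  by (simp add: Kq3_adj_def)

lemma V_mem[simp]: "(a,b,c) \<in> Kq3_vertices q \<longleftrightarrow> a \<in> {1..q} \<and> b \<in> {1..q} \<and> c \<in> {1..q}"
  by (simp add: Kq3_vertices_def)

lemma finite_V[simp]: "finite (Kq3_vertices q)" by (simp add: Kq3_vertices_def)

lemma I_mem: "x \<in> I_set V E C v \<longleftrightarrow> x \<in> V \<and> (x = v \<or> E v x) \<and> x \<in> C"
  by (auto simp: I_set_def closed_nbhd_def)

lemma line_lemma:
  assumes D: "is_DLD V E C" and v: "v \<in> V" "v \<notin> C" and IL: "I_set V E C v \<subseteq> L"
    and w: "w \<in> V" "w \<noteq> v"
    and cl: "\<And>c. c \<in> L \<Longrightarrow> c \<in> C \<Longrightarrow> c = w \<or> E w c"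
  shows "w \<in> C"
proof (rule ccontr)
  assume wC: "w \<notin> C"
  have all: "\<forall>u\<in>V - C. \<forall>v\<in>V - C. u \<noteq> v \<longrightarrow> I_set V E C u - I_set V E C v \<noteq> {}"
    using D by (simp add: is_DLD_def)
  have "v \<in> V - C" using v by simp
  moreover have "w \<in> V - C" using w wC by simp
  ultimately have ne: "I_set V E C v - I_set V E C w \<noteq> {}" using all w(2) by metis
  then obtain x where x1: "x \<in> I_set V E C v" and x2: "x \<notin> I_set V E C w" by blast
  from x1 have xL: "x \<in> L" using IL by blast
  from x1 have xC: "x \<in> C" and xV: "x \<in> V" unfolding I_mem by simp_all
  from cl[OF xL xC] have "x = w \<or> E w x" .
  with xV xC have "x \<in> I_set V E C w" unfolding I_mem by simp
  with x2 show False by contradiction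
qed

lemma two_other: "\<exists>x1 x2. x1 \<in> {1..(q::nat)} \<and> x2 \<in> {1..q} \<and> x1 \<noteq> a \<and> x2 \<noteq> a \<and> x1 \<noteq> x2" if "q \<ge> 3"
proof -
  consider "a = 1" | "a = 2" | "a \<noteq> 1 \<and> a \<noteq> 2" by blast
  then show ?thesis
  proof cases
    case 1 then show ?thesis using that by (intro exI[of _ 2] exI[of _ 3]) auto
  next
    case 2 then show ?thesis using that by (intro exI[of _ 1] exI[of _ 3]) auto
  next
    case 3 then show ?thesis using that by (intro exI[of _ 1] exI[of _ 2]) auto
  qed
qed

lemma DLD_sub: "is_DLD V E C \<Longrightarrow> C \<subseteq> V" by (simp add: is_DLD_def)


lemma I_ge2:
  assumes D: "is_DLD (Kq3_vertices q) Kq3_adj C" and q: "q \<ge> 3"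
    and v: "(a,b,z) \<in> Kq3_vertices q" "(a,b,z) \<notin> C"
  shows "card (I_set (Kq3_vertices q) Kq3_adj C (a,b,z)) \<ge> 2"
proof (rule ccontr)
  let ?V = "Kq3_vertices q"
  let ?I = "I_set ?V Kq3_adj C (a,b,z)"
  assume neg: "\<not> 2 \<le> card ?I"
  have fin: "finite ?I" by (rule finite_subset[of _ "Kq3_vertices q"]) (auto simp: I_set_def closed_nbhd_def)
  have eq: "\<forall>x\<in>?I. \<forall>y\<in>?I. x = y"
    using neg card_le_Suc0_iff_eq[OF fin] by auto
  have nb: "\<And>c. c \<in> ?I \<Longrightarrow> c \<in> {(x,b,z)|x. True} \<or> c \<in> {(a,y,z)|y. True} \<or> c \<in> {(a,b,w)|w. True}"
  proof -
    fix c assume "c \<in> ?I"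
    then show "c \<in> {(x,b,z)|x. True} \<or> c \<in> {(a,y,z)|y. True} \<or> c \<in> {(a,b,w)|w. True}"
      using v by (cases c) (auto simp: I_mem)
  qed
  have lines: "?I \<subseteq> {(x,b,z)|x. True} \<or> ?I \<subseteq> {(a,y,z)|y. True} \<or> ?I \<subseteq> {(a,b,w)|w. True}"
  proof (cases "?I = {}")
    case True then show ?thesis by auto
  next
    case False
    then obtain c where c: "c \<in> ?I" by blast
    with eq have "?I = {c}" by blast
    with nb[OF c] show ?thesis by auto
  qed
  from lines show False
  proof (elim disjE)
    assume L: "?I \<subseteq> {(x,b,z)|x. True}"
    obtain x1 x2 where x: "x1 \<in> {1..q}" "x2 \<in> {1..q}" "x1 \<noteq> a" "x2 \<noteq> a" "x1 \<noteq> x2"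
      using two_other[OF q] by blast
    have "(x1,b,z) \<in> C"
      by (rule line_lemma[OF D v(1) v(2) L]) (use v x in auto)
    moreover have "(x2,b,z) \<in> C"
      by (rule line_lemma[OF D v(1) v(2) L]) (use v x in auto)
    ultimately have "{(x1,b,z),(x2,b,z)} \<subseteq> ?I" using v x by (auto simp: I_mem)
    from card_mono[OF fin this] x show False using neg by auto
  next
    assume L: "?I \<subseteq> {(a,y,z)|y. True}"
    obtain x1 x2 where x: "x1 \<in> {1..q}" "x2 \<in> {1..q}" "x1 \<noteq> b" "x2 \<noteq> b" "x1 \<noteq> x2"
      using two_other[OF q] by blast
    have "(a,x1,z) \<in> C"
      by (rule line_lemma[OF D v(1) v(2) L]) (use v x in auto)
    moreover have "(a,x2,z) \<in> C"
      by (rule line_lemma[OF D v(1) v(2) L]) (use v x in auto)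
    ultimately have "{(a,x1,z),(a,x2,z)} \<subseteq> ?I" using v x by (auto simp: I_mem)
    from card_mono[OF fin this] x show False using neg by auto
  next
    assume L: "?I \<subseteq> {(a,b,w)|w. True}"
    obtain x1 x2 where x: "x1 \<in> {1..q}" "x2 \<in> {1..q}" "x1 \<noteq> z" "x2 \<noteq> z" "x1 \<noteq> x2"
      using two_other[OF q] by blast
    have "(a,b,x1) \<in> C"
      by (rule line_lemma[OF D v(1) v(2) L]) (use v x in auto)
    moreover have "(a,b,x2) \<in> C"
      by (rule line_lemma[OF D v(1) v(2) L]) (use v x in auto)
    ultimately have "{(a,b,x1),(a,b,x2)} \<subseteq> ?I" using v x by (auto simp: I_mem)
    from card_mono[OF fin this] x show False using neg by auto
  qed
qed


definition s1 :: "vtx set \<Rightarrow> nat \<Rightarrow> nat" where "s1 C a = card {c\<in>C. fst c = a}"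
definition s2 :: "vtx set \<Rightarrow> nat \<Rightarrow> nat" where "s2 C b = card {c\<in>C. fst (snd c) = b}"

lemma card_group:
  assumes "finite S" "g ` S \<subseteq> T" "finite T"
  shows "(\<Sum>y\<in>T. card {x\<in>S. g x = y}) = card S"
proof -
  have "(\<Sum>y\<in>T. \<Sum>x\<in>{x\<in>S. g x = y}. (1::nat)) = (\<Sum>x\<in>S. 1)"
    by (rule sum.group[OF assms(1) assms(3) assms(2)])
  then show ?thesis by simp
qed

lemma sum_s1: assumes "C \<subseteq> Kq3_vertices q" shows "(\<Sum>a\<in>{1..q}. s1 C a) = card C"
  unfolding s1_def
proof (rule card_group)
  show "finite C" using assms finite_subset finite_V by blast
  show "fst ` C \<subseteq> {1..q}" using assms by (auto simp: Kq3_vertices_def)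
qed simp

lemma sum_s2: assumes "C \<subseteq> Kq3_vertices q" shows "(\<Sum>a\<in>{1..q}. s2 C a) = card C"
  unfolding s2_def
proof (rule card_group)
  show "finite C" using assms finite_subset finite_V by blast
  show "(\<lambda>c. fst (snd c)) ` C \<subseteq> {1..q}" using assms by (auto simp: Kq3_vertices_def)
qed simp

lemma missing:
  assumes "finite S" "card S < q" 
  shows "\<exists>b\<in>{1..q}. b \<notin> g ` S"
proof (rule ccontr)
  assume "\<not> ?thesis"
  hence "{1..q} \<subseteq> g ` S" by auto
  hence "card {1..q} \<le> card (g ` S)" by (rule card_mono[rotated]) (use assms(1) in simp)
  also have "\<dots> \<le> card S" using assms(1) by (rule card_image_le)
  finally show False using assms(2) by simp
qed

lemma P1: assumes "finite C" "s1 C a < q" shows "\<exists>b\<in>{1..q}. \<forall>z. (a,b,z) \<notin> C"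
proof -
  obtain b where b: "b \<in> {1..q}" "b \<notin> (\<lambda>c. fst (snd c)) ` {c\<in>C. fst c = a}"
    using missing[of "{c\<in>C. fst c = a}" q "\<lambda>c. fst (snd c)"] assms unfolding s1_def by auto
  then have "\<forall>z. (a,b,z) \<notin> C" by force
  with b show ?thesis by blast
qed

lemma P1': assumes "finite C" "s1 C a < q" shows "\<exists>z\<in>{1..q}. \<forall>y. (a,y,z) \<notin> C"
proof -
  obtain b where b: "b \<in> {1..q}" "b \<notin> (\<lambda>c. snd (snd c)) ` {c\<in>C. fst c = a}"
    using missing[of "{c\<in>C. fst c = a}" q "\<lambda>c. snd (snd c)"] assms unfolding s1_def by auto
  then have "\<forall>z. (a,z,b) \<notin> C" by force
  with b show ?thesis by blast
qed

lemma Q1: assumes "finite C" "s2 C b < q" shows "\<exists>a\<in>{1..q}. \<forall>z. (a,b,z) \<notin> C"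
proof -
  obtain a where a: "a \<in> {1..q}" "a \<notin> fst ` {c\<in>C. fst (snd c) = b}"
    using missing[of "{c\<in>C. fst (snd c) = b}" q fst] assms unfolding s2_def by auto
  then have "\<forall>z. (a,b,z) \<notin> C" by force
  with a show ?thesis by blast
qed

lemma Q1': assumes "finite C" "s2 C b < q" shows "\<exists>z\<in>{1..q}. \<forall>x. (x,b,z) \<notin> C"
proof -
  obtain a where a: "a \<in> {1..q}" "a \<notin> (\<lambda>c. snd (snd c)) ` {c\<in>C. fst (snd c) = b}"
    using missing[of "{c\<in>C. fst (snd c) = b}" q "\<lambda>c. snd (snd c)"] assms unfolding s2_def by auto
  then have "\<forall>z. (z,b,a) \<notin> C" by force
  with a show ?thesis by blast
qed


lemma P2:
  assumes D: "is_DLD (Kq3_vertices q) Kq3_adj C" and q: "q \<ge> 3"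
    and ab: "a \<in> {1..q}" "b \<in> {1..q}" and E: "\<forall>z. (a,b,z) \<notin> C"
  shows "s1 C a + s2 C b \<ge> 2*q"
proof -
  let ?V = "Kq3_vertices q"
  have CV: "C \<subseteq> ?V" using D by (simp add: is_DLD_def)
  have fin: "finite C" using CV finite_subset finite_V by blast
  define A where "A z = {c\<in>{c\<in>C. fst c = a}. snd (snd c) = z}" for z
  define B where "B z = {c\<in>{c\<in>C. fst (snd c) = b}. snd (snd c) = z}" for z
  have sA: "(\<Sum>z\<in>{1..q}. card (A z)) = s1 C a"
    unfolding A_def s1_def by (rule card_group) (use fin CV in \<open>auto simp: Kq3_vertices_def\<close>)
  have sB: "(\<Sum>z\<in>{1..q}. card (B z)) = s2 C b"
    unfolding B_def s2_def by (rule card_group) (use fin CV in \<open>auto simp: Kq3_vertices_def\<close>)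
  have each: "card (A z) + card (B z) \<ge> 2" if z: "z \<in> {1..q}" for z
  proof -
    have v: "(a,b,z) \<in> ?V" "(a,b,z) \<notin> C" using ab z E by auto
    have "I_set ?V Kq3_adj C (a,b,z) \<subseteq> A z \<union> B z"
    proof
      fix c assume c: "c \<in> I_set ?V Kq3_adj C (a,b,z)"
      obtain x y w where cc: "c = (x,y,w)" by (cases c)
      from c v E show "c \<in> A z \<union> B z" unfolding cc by (auto simp: I_mem A_def B_def)
    qed
    hence "card (I_set ?V Kq3_adj C (a,b,z)) \<le> card (A z \<union> B z)"
      by (rule card_mono[rotated]) (use fin in \<open>simp add: A_def B_def\<close>)
    also have "\<dots> \<le> card (A z) + card (B z)" by (rule card_Un_le)
    finally show ?thesis using I_ge2[OF D q v] by linarith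
  qed
  have "(\<Sum>z\<in>{1..q}. (2::nat)) \<le> (\<Sum>z\<in>{1..q}. card (A z) + card (B z))"
    by (rule sum_mono) (rule each)
  also have "\<dots> = s1 C a + s2 C b" using sA sB by (simp add: sum.distrib)
  finally show ?thesis by simp
qed

lemma P3:
  assumes D: "is_DLD (Kq3_vertices q) Kq3_adj C" and s: "s1 C a < q"
    and ab: "a \<in> {1..q}" "a' \<in> {1..q}" "b \<in> {1..q}" "a \<noteq> a'"
    and E: "\<forall>z. (a,b,z) \<notin> C" and E': "\<forall>z. (a',b,z) \<notin> C"
  shows False
proof -
  let ?V = "Kq3_vertices q"
  have CV: "C \<subseteq> ?V" using D by (simp add: is_DLD_def)
  have fin: "finite C" using CV finite_subset finite_V by blast
  obtain z where z: "z \<in> {1..q}" "\<forall>y. (a,y,z) \<notin> C" using P1'[OF fin s] by blast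
  have v: "(a,b,z) \<in> ?V" "(a,b,z) \<notin> C" using ab z E by auto
  have IL: "I_set ?V Kq3_adj C (a,b,z) \<subseteq> {(x,b,z)|x. True}"
  proof
    fix c assume c: "c \<in> I_set ?V Kq3_adj C (a,b,z)"
    obtain x y w where cc: "c = (x,y,w)" by (cases c)
    from c v E z(2) show "c \<in> {(x,b,z)|x. True}" unfolding cc by (auto simp: I_mem)
  qed
  have "(a',b,z) \<in> C"
    by (rule line_lemma[OF D v IL]) (use ab z in auto)
  with E' show False by blast
qed

lemma Q3:
  assumes D: "is_DLD (Kq3_vertices q) Kq3_adj C" and s: "s2 C b < q"
    and ab: "a \<in> {1..q}" "b' \<in> {1..q}" "b \<in> {1..q}" "b \<noteq> b'"
    and E: "\<forall>z. (a,b,z) \<notin> C" and E': "\<forall>z. (a,b',z) \<notin> C"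
  shows False
proof -
  let ?V = "Kq3_vertices q"
  have CV: "C \<subseteq> ?V" using D by (simp add: is_DLD_def)
  have fin: "finite C" using CV finite_subset finite_V by blast
  obtain z where z: "z \<in> {1..q}" "\<forall>x. (x,b,z) \<notin> C" using Q1'[OF fin s] by blast
  have v: "(a,b,z) \<in> ?V" "(a,b,z) \<notin> C" using ab z E by auto
  have IL: "I_set ?V Kq3_adj C (a,b,z) \<subseteq> {(a,y,z)|y. True}"
  proof
    fix c assume c: "c \<in> I_set ?V Kq3_adj C (a,b,z)"
    obtain x y w where cc: "c = (x,y,w)" by (cases c)
    from c v E z(2) show "c \<in> {(a,y,z)|y. True}" unfolding cc by (auto simp: I_mem)
  qed
  have "(a,b',z) \<in> C"
    by (rule line_lemma[OF D v IL]) (use ab z in auto)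
  with E' show False by blast
qed

lemma half:
  fixes ua ub :: "nat \<Rightarrow> int" and Q :: int
  assumes K: "finite K" and fK: "f ` DA \<subseteq> K" and inj: "inj_on f DA" and DAK: "DA \<subseteq> K"
    and big: "\<And>a. a \<in> DA \<Longrightarrow> ub (f a) + ua a \<ge> 2*Q"
    and sm: "\<And>a. a \<in> DA \<Longrightarrow> ua a < Q"
    and DB: "DB = {b\<in>K. ub b < Q}"
  shows "(\<Sum>b\<in>K. ub b - Q) + (\<Sum>a\<in>DA. ua a - Q) \<ge> (\<Sum>b\<in>DB. ub b - Q)"
proof -
  let ?F = "f ` DA"
  have finDA: "finite DA" using K DAK finite_subset by blast
  have disj: "?F \<inter> DB = {}"
  proof (rule ccontr)
    assume "?F \<inter> DB \<noteq> {}"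
    then obtain a where a: "a \<in> DA" "f a \<in> DB" by blast
    from big[OF a(1)] sm[OF a(1)] a(2) DB show False by auto
  qed
  have DBK: "DB \<subseteq> K" using DB by auto
  have split: "(\<Sum>b\<in>K. ub b - Q) = (\<Sum>b\<in>?F \<union> DB. ub b - Q) + (\<Sum>b\<in>K - (?F \<union> DB). ub b - Q)"
  proof -
    have "?F \<union> DB \<subseteq> K" using fK DBK by auto
    from sum.subset_diff[OF this K, of "\<lambda>b. ub b - Q"] show ?thesis by simp
  qed
  have u: "(\<Sum>b\<in>?F \<union> DB. ub b - Q) = (\<Sum>b\<in>?F. ub b - Q) + (\<Sum>b\<in>DB. ub b - Q)"
    by (rule sum.union_disjoint) (use K fK DBK finite_subset disj in auto)
  have rest: "(\<Sum>b\<in>K - (?F \<union> DB). ub b - Q) \<ge> 0"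
    by (rule sum_nonneg) (use DB in auto)
  have re: "(\<Sum>b\<in>?F. ub b - Q) = (\<Sum>a\<in>DA. ub (f a) - Q)"
    using sum.reindex[OF inj] by simp
  have "(\<Sum>a\<in>DA. ub (f a) - Q) + (\<Sum>a\<in>DA. ua a - Q) = (\<Sum>a\<in>DA. ub (f a) + ua a - 2*Q)"
    by (simp add: sum.distrib[symmetric] algebra_simps)
  also have "\<dots> \<ge> 0" by (rule sum_nonneg) (use big in auto)
  finally show ?thesis using split u rest re by linarith
qed


lemma lower3:
  assumes D: "is_DLD (Kq3_vertices q) Kq3_adj C" and q: "q \<ge> 3"
  shows "card C \<ge> q^2"
proof -
  let ?V = "Kq3_vertices q"
  have CV: "C \<subseteq> ?V" using D by (simp add: is_DLD_def)
  have fin: "finite C" using CV finite_subset finite_V by blast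
  define K where "K = {1..q}"
  define t1 where "t1 a = int (s1 C a)" for a
  define t2 where "t2 b = int (s2 C b)" for b
  define D1 where "D1 = {a\<in>K. t1 a < int q}"
  define D2 where "D2 = {b\<in>K. t2 b < int q}"
  define f where "f a = (SOME b. b \<in> {1..q} \<and> (\<forall>z. (a,b,z) \<notin> C))" for a
  define g where "g b = (SOME a. a \<in> {1..q} \<and> (\<forall>z. (a,b,z) \<notin> C))" for b
  have fD: "f a \<in> {1..q} \<and> (\<forall>z. (a, f a, z) \<notin> C)" if "a \<in> D1" for a
  proof -
    have "s1 C a < q" using that by (simp add: D1_def t1_def)
    from P1[OF fin this] have "\<exists>b. b \<in> {1..q} \<and> (\<forall>z. (a,b,z) \<notin> C)" by blast
    then show ?thesis unfolding f_def by (rule someI_ex)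
  qed
  have gD: "g b \<in> {1..q} \<and> (\<forall>z. (g b, b, z) \<notin> C)" if "b \<in> D2" for b
  proof -
    have "s2 C b < q" using that by (simp add: D2_def t2_def)
    from Q1[OF fin this] have "\<exists>a. a \<in> {1..q} \<and> (\<forall>z. (a,b,z) \<notin> C)" by blast
    then show ?thesis unfolding g_def by (rule someI_ex)
  qed
  have H1: "(\<Sum>b\<in>K. t2 b - int q) + (\<Sum>a\<in>D1. t1 a - int q) \<ge> (\<Sum>b\<in>D2. t2 b - int q)"
  proof (rule half[where K=K and f=f and DA=D1 and ub=t2 and ua=t1 and Q="int q" and DB=D2])
    show "finite K" by (simp add: K_def)
    show "f ` D1 \<subseteq> K" using fD by (auto simp: K_def)
    show "D1 \<subseteq> K" by (auto simp: D1_def)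
    show "D2 = {b \<in> K. t2 b < int q}" by (simp add: D2_def)
    show "t1 a < int q" if "a \<in> D1" for a using that by (simp add: D1_def)
    show "t2 (f a) + t1 a \<ge> 2 * int q" if a: "a \<in> D1" for a
    proof -
      have "a \<in> {1..q}" using a by (simp add: D1_def K_def)
      from P2[OF D q this conjunct1[OF fD[OF a]] conjunct2[OF fD[OF a]]]
      show ?thesis by (simp add: t1_def t2_def)
    qed
    show "inj_on f D1"
    proof (rule inj_onI)
      fix a a' assume a: "a \<in> D1" "a' \<in> D1" "f a = f a'"
      show "a = a'"
      proof (rule ccontr)
        assume ne: "a \<noteq> a'"
        have "s1 C a < q" using a(1) by (simp add: D1_def t1_def)
        moreover have "a \<in> {1..q}" "a' \<in> {1..q}" using a by (auto simp: D1_def K_def)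
        ultimately show False using P3[OF D _ _ _ _ ne, of "f a"] fD[OF a(1)] fD[OF a(2)] a(3) by auto
      qed
    qed
  qed
  have H2: "(\<Sum>a\<in>K. t1 a - int q) + (\<Sum>b\<in>D2. t2 b - int q) \<ge> (\<Sum>a\<in>D1. t1 a - int q)"
  proof (rule half[where K=K and f=g and DA=D2 and ub=t1 and ua=t2 and Q="int q" and DB=D1])
    show "finite K" by (simp add: K_def)
    show "g ` D2 \<subseteq> K" using gD by (auto simp: K_def)
    show "D2 \<subseteq> K" by (auto simp: D2_def)
    show "D1 = {b \<in> K. t1 b < int q}" by (simp add: D1_def)
    show "t2 a < int q" if "a \<in> D2" for a using that by (simp add: D2_def)
    show "t1 (g b) + t2 b \<ge> 2 * int q" if b: "b \<in> D2" for b
    proof -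
      have "b \<in> {1..q}" using b by (simp add: D2_def K_def)
      from P2[OF D q conjunct1[OF gD[OF b]] this conjunct2[OF gD[OF b]]]
      show ?thesis by (simp add: t1_def t2_def)
    qed
    show "inj_on g D2"
    proof (rule inj_onI)
      fix b b' assume b: "b \<in> D2" "b' \<in> D2" "g b = g b'"
      show "b = b'"
      proof (rule ccontr)
        assume ne: "b \<noteq> b'"
        have "s2 C b < q" using b(1) by (simp add: D2_def t2_def)
        moreover have "b \<in> {1..q}" "b' \<in> {1..q}" using b by (auto simp: D2_def K_def)
        ultimately show False using Q3[OF D _ _ _ _ ne, of "g b"] gD[OF b(1)] gD[OF b(2)] b(3) by auto
      qed
    qed
  qed
  have S1: "(\<Sum>a\<in>K. t1 a - int q) = int (card C) - int q * int q"
    using sum_s1[OF CV] by (simp add: sum_subtractf t1_def K_def flip: of_nat_sum)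
  have S2: "(\<Sum>a\<in>K. t2 a - int q) = int (card C) - int q * int q"
    using sum_s2[OF CV] by (simp add: sum_subtractf t2_def K_def flip: of_nat_sum)
  from H1 H2 S1 S2 have "int (card C) \<ge> int q * int q" by linarith
  then show ?thesis by (simp add: power2_eq_square flip: of_nat_mult)
qed


lemma other2: "x \<in> {1..2::nat} \<Longrightarrow> a \<in> {1,2} \<Longrightarrow> x \<noteq> a \<Longrightarrow> x = 3 - a" by auto

lemma lower2:
  assumes D: "is_DLD (Kq3_vertices 2) Kq3_adj C"
  shows "card C \<ge> 4"
proof (rule ccontr)
  let ?V = "Kq3_vertices 2"
  assume "\<not> card C \<ge> 4"
  hence c3: "card C \<le> 3" by simp
  have CV: "C \<subseteq> ?V" using D by (simp add: is_DLD_def)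
  have fin: "finite C" using CV finite_subset finite_V by blast
  have e12: "{1..2::nat} = {1,2}" by auto
  have "s1 C 1 + s1 C 2 = card C" using sum_s1[OF CV] unfolding e12 by simp
  then have "s1 C 1 \<le> 1 \<or> s1 C 2 \<le> 1" using c3 by linarith
  then obtain a where a: "a \<in> {1,2}" "s1 C a \<le> 1" by blast
  let ?A = "{c\<in>C. fst c = a}"
  have finA: "finite ?A" using fin by simp
  have Aeq: "\<forall>x\<in>?A. \<forall>y\<in>?A. x = y" using a(2) card_le_Suc0_iff_eq[OF finA] by (simp add: s1_def)
  obtain b z where bz: "b \<in> {1,2}" "z \<in> {1,2}" "(a,b,z) \<notin> C" "(a,3-b,z) \<notin> C" "(a,b,3-z) \<notin> C"
  proof (cases "?A = {}")
    case True
    then have "\<forall>y w. (a,y,w) \<notin> C" by auto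
    then show ?thesis using that[of 1 1] by auto
  next
    case False
    then obtain p where p: "p \<in> ?A" by blast
    obtain y0 z0 where pp: "p = (a,y0,z0)" using p by (cases p) auto
    have yz: "y0 \<in> {1,2}" "z0 \<in> {1,2}" using p CV pp by auto
    have notin: "(a,y,w) \<notin> C" if "(a,y,w) \<noteq> p" for y w
    proof
      assume "(a,y,w) \<in> C"
      then have "(a,y,w) \<in> ?A" by simp
      with Aeq p have "(a,y,w) = p" by blast
      with that show False by simp
    qed
    show ?thesis
      by (rule that[of "3 - y0" "3 - z0"]) (use yz notin pp in auto)
  qed
  define a' where "a' = 3 - a"
  define b' where "b' = 3 - b"
  define z' where "z' = 3 - z"
  have pr: "a' \<in> {1,2}" "b' \<in> {1,2}" "z' \<in> {1,2}" "a' \<noteq> a" "b' \<noteq> b" "z' \<noteq> z"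
    using a bz by (auto simp: a'_def b'_def z'_def)
  have v: "(a,b,z) \<in> ?V" "(a,b,z) \<notin> C" using a bz by auto
  have IL: "I_set ?V Kq3_adj C (a,b,z) \<subseteq> {(a',b,z)}"
  proof
    fix c assume c: "c \<in> I_set ?V Kq3_adj C (a,b,z)"
    obtain x y w where cc: "c = (x,y,w)" by (cases c)
    have xyw: "x \<in> {1..2}" "y \<in> {1..2}" "w \<in> {1..2}" using c cc by (auto simp: I_mem)
    have "(x \<noteq> a \<and> y = b \<and> w = z) \<or> (x = a \<and> y \<noteq> b \<and> w = z) \<or> (x = a \<and> y = b \<and> w \<noteq> z)"
      using c cc v by (auto simp: I_mem)
    moreover have "c \<in> C" using c by (simp add: I_mem)
    ultimately show "c \<in> {(a',b,z)}"
      using other2[OF xyw(1) a(1)] other2[OF xyw(2) bz(1)] other2[OF xyw(3) bz(2)] bz cc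
      by (auto simp: a'_def)
  qed
  have c0: "(a',b,z) \<in> C"
    by (rule line_lemma[OF D v IL]) (use pr bz in auto)
  have IL0: "I_set ?V Kq3_adj C (a,b,z) \<subseteq> {(a',b,z)}" by (rule IL)
  have w1: "(a',b',z) \<in> C"
    by (rule line_lemma[OF D v IL0]) (use pr bz in auto)
  have w2: "(a',b,z') \<in> C"
    by (rule line_lemma[OF D v IL0]) (use pr bz in auto)
  have sub: "{(a',b,z),(a',b',z),(a',b,z')} \<subseteq> C" using c0 w1 w2 by auto
  have "card {(a',b,z),(a',b',z),(a',b,z')} = 3" using pr by auto
  hence Ceq: "C = {(a',b,z),(a',b',z),(a',b,z')}"
    using card_subset_eq[OF fin sub] c3 card_mono[OF fin sub] by simp
  have u: "(a,b',z') \<in> ?V" "(a,b',z') \<notin> C" using a pr Ceq by auto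
  have IU: "I_set ?V Kq3_adj C (a,b',z') \<subseteq> {}"
  proof
    fix c assume c: "c \<in> I_set ?V Kq3_adj C (a,b',z')"
    then have "c \<in> C" "c = (a,b',z') \<or> Kq3_adj (a,b',z') c" by (auto simp: I_mem)
    then show "c \<in> {}" using pr u(2) unfolding Ceq by auto
  qed
  have "(a,b,z) \<in> C"
    by (rule line_lemma[OF D u IU]) (use v pr in auto)
  with v show False by simp
qed


definition C0 :: "nat \<Rightarrow> vtx set" where
  "C0 q = {v \<in> Kq3_vertices q. q dvd (fst v + fst (snd v) + snd (snd v))}"

lemma comp:
  assumes "0 < (q::nat)"
  shows "q - s mod q \<in> {1..q} \<and> q dvd (s + (q - s mod q))"
proof -
  have m: "s mod q < q" using assms by simp
  have "s div q * q + s mod q = s" by (rule div_mult_mod_eq)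
  hence "s + (q - s mod q) = s div q * q + q" using m by linarith
  hence "s + (q - s mod q) = q * (s div q + 1)" by (simp add: algebra_simps)
  then show ?thesis using m by auto
qed

lemma uniq:
  assumes "c \<in> {1..(q::nat)}" "c' \<in> {1..q}" "q dvd (s + c)" "q dvd (s + c')"
  shows "c = c'"
proof (rule ccontr)
  assume ne: "c \<noteq> c'"
  { fix x y :: nat assume xy: "x \<in> {1..q}" "y \<in> {1..q}" "q dvd (s + x)" "q dvd (s + y)" "x < y"
    have "q dvd ((s + y) - (s + x))" using xy by (simp only: dvd_diff_nat)
    hence "q dvd (y - x)" by simp
    moreover have "0 < y - x" using xy by simp
    ultimately have "q \<le> y - x" by (rule dvd_imp_le)
    with xy have False by auto }
  note * = this
  show False
  proof (cases "c < c'")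
    case True then show False using *[of c c'] assms by blast
  next
    case False then have "c' < c" using ne by simp
    then show False using *[of c' c] assms by blast
  qed
qed

lemma C0_mem: "(a,b,c) \<in> C0 q \<longleftrightarrow> a \<in> {1..q} \<and> b \<in> {1..q} \<and> c \<in> {1..q} \<and> q dvd (a + b + c)"
  by (simp add: C0_def)

lemma C0_DLD:
  assumes q: "q \<ge> 1"
  shows "is_DLD (Kq3_vertices q) Kq3_adj (C0 q)"
proof -
  let ?V = "Kq3_vertices q"
  have q0: "0 < q" using q by simp
  have sub: "C0 q \<subseteq> ?V" by (auto simp: C0_def)
  have ne: "C0 q \<noteq> {}"
  proof -
    have "(1, 1, q - (1+1) mod q) \<in> C0 q"
      using comp[OF q0, of "1+1"] q by (simp add: C0_mem add.assoc)
    then show ?thesis by blast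
  qed
  have sep: "I_set ?V Kq3_adj (C0 q) u - I_set ?V Kq3_adj (C0 q) v \<noteq> {}"
    if u: "u \<in> ?V - C0 q" and v: "v \<in> ?V - C0 q" and uv: "u \<noteq> v" for u v
  proof -
    obtain a b c where uu: "u = (a,b,c)" by (cases u)
    obtain v1 v2 v3 where vv: "v = (v1,v2,v3)" by (cases v)
    define x1 where "x1 = q - (b+c) mod q"
    define y1 where "y1 = q - (a+c) mod q"
    define z1 where "z1 = q - (a+b) mod q"
    have abc: "a \<in> {1..q}" "b \<in> {1..q}" "c \<in> {1..q}" "\<not> q dvd (a+b+c)"
      using u uu by (auto simp: C0_mem)
    have x1: "x1 \<in> {1..q}" "q dvd (x1 + b + c)"
      using comp[OF q0, of "b+c"] unfolding x1_def by (simp_all add: add_ac)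
    have y1: "y1 \<in> {1..q}" "q dvd (a + y1 + c)"
      using comp[OF q0, of "a+c"] unfolding y1_def by (simp_all add: add_ac)
    have z1: "z1 \<in> {1..q}" "q dvd (a + b + z1)"
      using comp[OF q0, of "a+b"] unfolding z1_def by (simp_all add: add_ac)
    have ne1: "x1 \<noteq> a" using x1 abc by auto
    have ne2: "y1 \<noteq> b" using y1 abc by auto
    have ne3: "z1 \<noteq> c" using z1 abc by auto
    have in1: "(x1,b,c) \<in> I_set ?V Kq3_adj (C0 q) u" using x1 abc ne1 uu by (auto simp: I_mem C0_mem)
    have in2: "(a,y1,c) \<in> I_set ?V Kq3_adj (C0 q) u" using y1 abc ne2 uu by (auto simp: I_mem C0_mem)
    have in3: "(a,b,z1) \<in> I_set ?V Kq3_adj (C0 q) u" using z1 abc ne3 uu by (auto simp: I_mem C0_mem)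
    have vC: "v \<notin> C0 q" using v by simp
    show ?thesis
    proof (rule ccontr)
      assume "\<not> ?thesis"
      hence all: "(x1,b,c) \<in> I_set ?V Kq3_adj (C0 q) v" "(a,y1,c) \<in> I_set ?V Kq3_adj (C0 q) v"
        "(a,b,z1) \<in> I_set ?V Kq3_adj (C0 q) v" using in1 in2 in3 by blast+
      have "Kq3_adj v (x1,b,c)" "Kq3_adj v (a,y1,c)" "Kq3_adj v (a,b,z1)"
        using all vC by (auto simp: I_mem)
      then show False using ne1 ne2 ne3 uv uu vv by auto
    qed
  qed
  show ?thesis unfolding is_DLD_def using sub ne sep by blast
qed

lemma C0_card:
  assumes q: "q \<ge> 1"
  shows "card (C0 q) = q^2"
proof -
  have q0: "0 < q" using q by simp
  let ?f = "\<lambda>v::vtx. (fst v, fst (snd v))"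
  have inj: "inj_on ?f (C0 q)"
  proof (rule inj_onI)
    fix v w assume v: "v \<in> C0 q" and w: "w \<in> C0 q" and e: "?f v = ?f w"
    obtain a b c where vv: "v = (a,b,c)" by (cases v)
    obtain a' b' c' where ww: "w = (a',b',c')" by (cases w)
    have "a = a'" "b = b'" using e vv ww by auto
    moreover have "c = c'"
      using v w vv ww \<open>a = a'\<close> \<open>b = b'\<close> uniq[of c q c' "a+b"] by (auto simp: C0_mem)
    ultimately show "v = w" using vv ww by simp
  qed
  have img: "?f ` C0 q = {1..q} \<times> {1..q}"
  proof
    show "?f ` C0 q \<subseteq> {1..q} \<times> {1..q}" by (auto simp: C0_def Kq3_vertices_def)
  next
    show "{1..q} \<times> {1..q} \<subseteq> ?f ` C0 q"
    proof
      fix p assume p: "p \<in> {1..q} \<times> {1..q}"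
      obtain a b where pp: "p = (a,b)" by (cases p)
      have "(a, b, q - (a+b) mod q) \<in> C0 q"
        using comp[OF q0, of "a+b"] p pp by (simp add: C0_mem)
      moreover have "p = ?f (a, b, q - (a+b) mod q)" using pp by simp
      ultimately show "p \<in> ?f ` C0 q" by blast
    qed
  qed
  have "card (C0 q) = card ({1..q} \<times> {1..q})"
    using bij_betw_same_card[OF bij_betw_imageI[OF inj img]] .
  then show ?thesis by (simp add: power2_eq_square)
qed

theorem theorem23:
  fixes q :: nat
  assumes "q \<ge> 2"
  shows "gamma_DLD (Kq3_vertices q) Kq3_adj = q ^ 2"
  unfolding gamma_DLD_def
proof (rule Least_equality)
  show "\<exists>C. is_DLD (Kq3_vertices q) Kq3_adj C \<and> card C = q^2"
    using C0_DLD C0_card assms by (metis one_le_numeral order_trans)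
next
  fix k assume "\<exists>C. is_DLD (Kq3_vertices q) Kq3_adj C \<and> card C = k"
  then obtain C where D: "is_DLD (Kq3_vertices q) Kq3_adj C" and k: "card C = k" by blast
  show "q^2 \<le> k"
  proof (cases "q = 2")
    case True
    from D True have "is_DLD (Kq3_vertices 2) Kq3_adj C" by simp
    from lower2[OF this] k True show ?thesis by simp
  next
    case False
    with assms have "q \<ge> 3" by simp
    with lower3 D k show ?thesis by blast
  qed
qed


end
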